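(* Let $G$ be a fullerene graph. If $G$ has a perfect star packing, then the number of vertices of $G$ is divisible by $8$.
   Context: A fullerene graph is a finite simple connected (equivalently, $3$-connected) plane cubic graph all of whose faces are pentagons or hexagons. A perfect star packing of a graph $G$ is a spanning subgraph of $G$ every connected component of which is isomorphic to the star $K_{1,3}$. *)

theory Defs
  imports Main
begin

text \<open>Simple graphs: finite vertex set V, edges as a symmetric irreflexive
  set of ordered pairs (darts) E; each undirected edge {u,v} appears as (u,v) and (v,u).\<close>

definition simple_graph :: "'a set \<Rightarrow> ('a \<times> 'a) set \<Rightarrow> bool" where
  "simple_graph V E \<longleftrightarrow> finite V \<and> E \<subseteq> V \<times> V \<and> sym E \<and> (\<forall>v. (v, v) \<notin> E)"

definition nbrs :: "('a \<times> 'a) set \<Rightarrow> 'a \<Rightarrow> 'a set" where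
  "nbrs E v = {u. (v, u) \<in> E}"

definition cubic :: "'a set \<Rightarrow> ('a \<times> 'a) set \<Rightarrow> bool" where
  "cubic V E \<longleftrightarrow> (\<forall>v\<in>V. card (nbrs E v) = 3)"

definition connected_graph :: "'a set \<Rightarrow> ('a \<times> 'a) set \<Rightarrow> bool" where
  "connected_graph V E \<longleftrightarrow> V \<noteq> {} \<and> (\<forall>u\<in>V. \<forall>v\<in>V. (u, v) \<in> E\<^sup>*)"

definition rotation_system :: "'a set \<Rightarrow> ('a \<times> 'a) set \<Rightarrow> ('a \<Rightarrow> 'a \<Rightarrow> 'a) \<Rightarrow> bool" where
  "rotation_system V E rot \<longleftrightarrow>
     (\<forall>v\<in>V. rot v ` nbrs E v = nbrs E v \<and>
        (\<forall>u\<in>nbrs E v. \<forall>w\<in>nbrs E v. \<exists>k. (rot v ^^ k) u = w))"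

text \<open>Face-tracing permutation on darts; faces are its orbits.\<close>
definition face_step :: "('a \<Rightarrow> 'a \<Rightarrow> 'a) \<Rightarrow> 'a \<times> 'a \<Rightarrow> 'a \<times> 'a" where
  "face_step rot d = (snd d, rot (snd d) (fst d))"

definition face_of :: "('a \<Rightarrow> 'a \<Rightarrow> 'a) \<Rightarrow> 'a \<times> 'a \<Rightarrow> ('a \<times> 'a) set" where
  "face_of rot d = {(face_step rot ^^ k) d | k. True}"

definition faces :: "('a \<times> 'a) set \<Rightarrow> ('a \<Rightarrow> 'a \<Rightarrow> 'a) \<Rightarrow> ('a \<times> 'a) set set" where
  "faces E rot = face_of rot ` E"

text \<open>The embedding given by rot is planar (spherical) iff Euler's formula
  V - E + F = 2 holds (card E counts darts = twice the number of edges).\<close>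
definition plane_embedding :: "'a set \<Rightarrow> ('a \<times> 'a) set \<Rightarrow> ('a \<Rightarrow> 'a \<Rightarrow> 'a) \<Rightarrow> bool" where
  "plane_embedding V E rot \<longleftrightarrow> rotation_system V E rot \<and>
     2 * int (card V) - int (card E) + 2 * int (card (faces E rot)) = 4"

text \<open>A face is a pentagon (hexagon) if its boundary walk is a cycle of length 5 (6).\<close>
definition penta_or_hexa :: "('a \<times> 'a) set \<Rightarrow> bool" where
  "penta_or_hexa f \<longleftrightarrow> card f \<in> {5, 6} \<and> card (fst ` f) = card f"

definition fullerene :: "'a set \<Rightarrow> ('a \<times> 'a) set \<Rightarrow> bool" where
  "fullerene V E \<longleftrightarrow> simple_graph V E \<and> connected_graph V E \<and> cubic V E \<and>
     (\<exists>rot. plane_embedding V E rot \<and> (\<forall>f\<in>faces E rot. penta_or_hexa f))"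

definition is_star_K13 :: "'a set \<Rightarrow> ('a \<times> 'a) set \<Rightarrow> bool" where
  "is_star_K13 C H \<longleftrightarrow> card C = 4 \<and>
     (\<exists>c\<in>C. H \<inter> (C \<times> C) = {(c, x) | x. x \<in> C - {c}} \<union> {(x, c) | x. x \<in> C - {c}})"

definition perfect_star_packing :: "'a set \<Rightarrow> ('a \<times> 'a) set \<Rightarrow> bool" where
  "perfect_star_packing V E \<longleftrightarrow>
     (\<exists>H. H \<subseteq> E \<and> sym H \<and> (\<forall>v\<in>V. is_star_K13 {u. (v, u) \<in> H\<^sup>*} H))"

end

theory Submission
  imports Defs
begin



lemma funpow_cancel:
  assumes "inj_on g A" "\<forall>x\<in>A. g x \<in> A"
  shows "y \<in> A \<Longrightarrow> z \<in> A \<Longrightarrow> (g ^^ i) y = (g ^^ i) z \<Longrightarrow> y = z"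
proof (induction i arbitrary: y z)
  case 0 then show ?case by simp
next
  case (Suc i)
  have in1: "\<And>w k. w \<in> A \<Longrightarrow> (g ^^ k) w \<in> A"
  proof -
    fix w k assume "w \<in> A" then show "(g ^^ k) w \<in> A" using assms(2) by (induction k) auto
  qed
  have "g ((g ^^ i) y) = g ((g ^^ i) z)" using Suc.prems by simp
  then have "(g ^^ i) y = (g ^^ i) z" using assms(1) in1 Suc.prems by (meson inj_onD)
  then show ?case using Suc by blast
qed

lemma period_gen:
  assumes "finite A" "inj_on g A" "\<forall>x\<in>A. g x \<in> A" "x \<in> A"
  shows "\<exists>n>0. (g ^^ n) x = x"
proof -
  have in1: "(g ^^ k) x \<in> A" for k using assms(3,4) by (induction k) auto
  let ?h = "\<lambda>i. (g ^^ i) x"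
  have "\<not> inj_on ?h {0..card A}"
  proof
    assume "inj_on ?h {0..card A}"
    then have "card (?h ` {0..card A}) = card A + 1" by (simp add: card_image)
    moreover have "?h ` {0..card A} \<subseteq> A" using in1 by auto
    ultimately show False using card_mono[OF assms(1)] by (metis add_le_same_cancel1 not_one_le_zero)
  qed
  then obtain i j where ij: "i \<noteq> j" "?h i = ?h j" unfolding inj_on_def by blast
  { fix i j assume "i < j" "?h i = ?h j"
    then have "(g ^^ i) ((g ^^ (j - i)) x) = (g ^^ i) x"
      by (metis funpow_add o_apply le_add_diff_inverse less_imp_le_nat)
    then have "(g ^^ (j - i)) x = x" using funpow_cancel[OF assms(2,3)] in1 assms(4) by blast
    then have "\<exists>n>0. (g ^^ n) x = x" using \<open>i < j\<close> by (intro exI[of _ "j - i"]) auto }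
  then show ?thesis using ij by (metis linorder_neqE_nat)
qed




locale SP =
  fixes V :: "'a set" and E :: "('a \<times> 'a) set" and rot :: "'a \<Rightarrow> 'a \<Rightarrow> 'a" and H :: "('a \<times> 'a) set"
  assumes finV: "finite V" and EV: "E \<subseteq> V \<times> V" and symE: "sym E" and irr: "\<And>v. (v, v) \<notin> E"
    and cub: "cubic V E" and rs: "rotation_system V E rot"
    and ph: "\<And>f. f \<in> faces E rot \<Longrightarrow> penta_or_hexa f"
    and HE: "H \<subseteq> E" and symH: "sym H"
    and star: "\<And>v. v \<in> V \<Longrightarrow> is_star_K13 {u. (v, u) \<in> H\<^sup>*} H"
begin

abbreviation fs where "fs \<equiv> face_step rot"

lemma fs_simp[simp]: "fs (a, b) = (b, rot b a)" by (simp add: face_step_def)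

lemma finE: "finite E" using finV EV by (meson finite_SigmaI finite_subset)

lemma E_sym: "(a, b) \<in> E \<Longrightarrow> (b, a) \<in> E" using symE by (meson symD)

lemma E_V: "(a, b) \<in> E \<Longrightarrow> a \<in> V \<and> b \<in> V" using EV by auto

lemma nbrs_iff[simp]: "u \<in> nbrs E v \<longleftrightarrow> (v, u) \<in> E" by (simp add: nbrs_def)

lemma nb3: "v \<in> V \<Longrightarrow> card (nbrs E v) = 3" using cub by (simp add: cubic_def)

lemma fin_nbrs: "finite (nbrs E v)"
proof -
  have "nbrs E v \<subseteq> V" using E_V by auto
  then show ?thesis using finV finite_subset by blast
qed

lemma rot_in: "v \<in> V \<Longrightarrow> u \<in> nbrs E v \<Longrightarrow> rot v u \<in> nbrs E v"
  using rs unfolding rotation_system_def by blast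

lemma rot_inj: "v \<in> V \<Longrightarrow> inj_on (rot v) (nbrs E v)"
  using rs fin_nbrs unfolding rotation_system_def by (metis eq_card_imp_inj_on)

lemma rot_nofix: "v \<in> V \<Longrightarrow> u \<in> nbrs E v \<Longrightarrow> rot v u \<noteq> u"
proof
  assume v: "v \<in> V" and u: "u \<in> nbrs E v" and fx: "rot v u = u"
  have it: "(rot v ^^ k) u = u" for k using fx by (induction k) auto
  have "\<forall>w\<in>nbrs E v. w = u" using rs v u it unfolding rotation_system_def by metis
  then have "nbrs E v \<subseteq> {u}" by auto
  then have "card (nbrs E v) \<le> card {u}" by (intro card_mono) auto
  then have "card (nbrs E v) \<le> 1" by simp
  then show False using nb3 v by simp
qed

lemma three_elems:
  assumes "v \<in> V" "a \<in> nbrs E v" "b \<in> nbrs E v" "c \<in> nbrs E v" "a \<noteq> b" "a \<noteq> c" "b \<noteq> c"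
  shows "nbrs E v = {a, b, c}"
proof -
  have "{a, b, c} \<subseteq> nbrs E v" using assms by auto
  moreover have "card {a, b, c} = 3" using assms by auto
  ultimately show ?thesis using card_subset_eq[OF fin_nbrs] nb3[OF assms(1)] by metis
qed

lemma exists_third:
  assumes "v \<in> V" "a \<in> nbrs E v" "b \<in> nbrs E v"
  shows "\<exists>z\<in>nbrs E v. z \<noteq> a \<and> z \<noteq> b"
proof (rule ccontr)
  assume "\<not> ?thesis"
  then have "nbrs E v \<subseteq> {a, b}" by auto
  then have "card (nbrs E v) \<le> card {a, b}" by (intro card_mono) auto
  also have "\<dots> \<le> 2" by (simp add: card_insert_if)
  finally have "card (nbrs E v) \<le> 2" .
  then show False using nb3 assms(1) by simp
qed

lemma rot_no2: "v \<in> V \<Longrightarrow> u \<in> nbrs E v \<Longrightarrow> rot v (rot v u) \<noteq> u"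
proof
  assume v: "v \<in> V" and u: "u \<in> nbrs E v" and h: "rot v (rot v u) = u"
  define a where "a = rot v u"
  have a: "a \<in> nbrs E v" "a \<noteq> u" using rot_in rot_nofix v u a_def by auto
  obtain z where z: "z \<in> nbrs E v" "z \<noteq> u" "z \<noteq> a" using exists_third[OF v u a(1)] by blast
  have N: "nbrs E v = {u, a, z}" using three_elems[OF v u a(1) z(1)] a z by auto
  have rz: "rot v z \<in> nbrs E v" using rot_in v z by auto
  have "rot v z \<noteq> a" using rot_inj[OF v] z u a_def by (metis inj_onD)
  moreover have "rot v z \<noteq> u" using rot_inj[OF v] z a h a_def by (metis inj_onD)
  moreover have "rot v z \<noteq> z" using rot_nofix v z by auto
  ultimately show False using rz N by auto
qed

lemma rot_third:
  assumes "v \<in> V" "u \<in> nbrs E v" "z \<in> nbrs E v" "z \<noteq> u" "z \<noteq> rot v u"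
  shows "rot v (rot v u) = z"
proof -
  have a: "rot v u \<in> nbrs E v" "rot v u \<noteq> u" using rot_in rot_nofix assms by auto
  have N: "nbrs E v = {u, rot v u, z}" using three_elems[OF assms(1,2) a(1) assms(3)] a assms by auto
  have "rot v (rot v u) \<in> nbrs E v" using rot_in assms(1) a by auto
  then show ?thesis using N rot_nofix[OF assms(1) a(1)] rot_no2[OF assms(1,2)] by auto
qed

end



context SP begin

lemma fs_E: "d \<in> E \<Longrightarrow> fs d \<in> E"
proof -
  assume d: "d \<in> E"
  obtain a b where ab: "d = (a, b)" by fastforce
  have "b \<in> V" "a \<in> nbrs E b" using d ab E_V E_sym by auto
  then have "rot b a \<in> nbrs E b" by (rule rot_in)
  then show ?thesis using ab by simp
qed

lemma fs_inj: "inj_on fs E"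
proof (rule inj_onI)
  fix d d' assume d: "d \<in> E" and d': "d' \<in> E" and eq: "fs d = fs d'"
  obtain a b where ab: "d = (a, b)" by fastforce
  obtain a' b' where ab': "d' = (a', b')" by fastforce
  have bb: "b = b'" and r: "rot b a = rot b a'" using eq ab ab' by auto
  have "b \<in> V" "a \<in> nbrs E b" "a' \<in> nbrs E b" using d d' ab ab' bb E_V E_sym by auto
  then have "a = a'" using rot_inj r by (meson inj_onD)
  then show "d = d'" using ab ab' bb by simp
qed

lemma fsn_E: "d \<in> E \<Longrightarrow> (fs ^^ k) d \<in> E" by (induction k) (auto simp: fs_E simp del: fs_simp)

lemma period: "d \<in> E \<Longrightarrow> \<exists>n>0. (fs ^^ n) d = d"
  using period_gen[OF finE fs_inj] fs_E by blast

lemma face_sub: "d \<in> E \<Longrightarrow> face_of rot d \<subseteq> E"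
proof
  fix e assume "d \<in> E" "e \<in> face_of rot d"
  then obtain k where "e = (fs ^^ k) d" unfolding face_of_def by blast
  then show "e \<in> E" using fsn_E \<open>d \<in> E\<close> by simp
qed

lemma face_self: "d \<in> face_of rot d"
proof -
  have "d = (fs ^^ 0) d" by simp
  then show ?thesis unfolding face_of_def by blast
qed

lemma face_step_in: "d' \<in> face_of rot d \<Longrightarrow> fs d' \<in> face_of rot d"
proof -
  assume "d' \<in> face_of rot d"
  then obtain k where "d' = (fs ^^ k) d" unfolding face_of_def by blast
  then have "fs d' = (fs ^^ Suc k) d" by simp
  then show ?thesis unfolding face_of_def by blast
qed

lemma face_eq: assumes "d \<in> E" "d' \<in> face_of rot d" shows "face_of rot d' = face_of rot d"
proof -
  obtain k where k: "d' = (fs ^^ k) d" using assms(2) unfolding face_of_def by auto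
  obtain n where n: "n > 0" "(fs ^^ n) d = d" using period[OF assms(1)] by auto
  have nk: "(fs ^^ (n * k)) d = d" for k
    by (induction k) (simp, metis funpow_add mult_Suc_right n(2) o_apply)
  show ?thesis
  proof
    show "face_of rot d' \<subseteq> face_of rot d"
    proof
      fix e assume "e \<in> face_of rot d'"
      then obtain m where "e = (fs ^^ m) d'" unfolding face_of_def by blast
      then have "e = (fs ^^ (m + k)) d" unfolding k by (simp add: funpow_add)
      then show "e \<in> face_of rot d" unfolding face_of_def by blast
    qed
  next
    show "face_of rot d \<subseteq> face_of rot d'"
    proof
      fix e assume "e \<in> face_of rot d"
      then obtain m where m: "e = (fs ^^ m) d" unfolding face_of_def by auto
      have "k \<le> n * k" using n(1) by simp
      have "(fs ^^ (m + (n * k - k))) d' = (fs ^^ (m + (n * k - k) + k)) d"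
        unfolding k by (simp add: funpow_add)
      also have "m + (n * k - k) + k = m + n * k" using \<open>k \<le> n * k\<close> by linarith
      also have "(fs ^^ (m + n * k)) d = e" unfolding m by (simp add: funpow_add nk)
      finally show "e \<in> face_of rot d'" unfolding face_of_def by blast
    qed
  qed
qed

lemma face_pred: assumes "d \<in> E" "d' \<in> face_of rot d" shows "\<exists>p \<in> face_of rot d. fs p = d'"
proof -
  have d'E: "d' \<in> E" using face_sub assms by blast
  obtain n where n: "n > 0" "(fs ^^ n) d' = d'" using period[OF d'E] by auto
  have "(fs ^^ (n - 1)) d' \<in> face_of rot d'" unfolding face_of_def by blast
  moreover have "fs ((fs ^^ (n - 1)) d') = d'" using n by (metis Suc_diff_1 funpow.simps(2) o_apply)
  ultimately show ?thesis using face_eq[OF assms] by auto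
qed

lemma face_card3: assumes "(fs ^^ 3) d = d" shows "card (face_of rot d) \<le> 3"
proof -
  have "face_of rot d \<subseteq> {d, fs d, fs (fs d)}"
  proof
    fix e assume "e \<in> face_of rot d"
    then obtain k where k: "e = (fs ^^ k) d" unfolding face_of_def by auto
    have "(fs ^^ (k mod 3)) d = (fs ^^ k) d" by (rule funpow_mod_eq) (rule assms)
    then have "e = (fs ^^ (k mod 3)) d" unfolding k by simp
    moreover have "k mod 3 = 0 \<or> k mod 3 = 1 \<or> k mod 3 = 2" by auto
    ultimately show "e \<in> {d, fs d, fs (fs d)}" by (auto simp del: fs_simp simp add: numeral_2_eq_2)
  qed
  then have "card (face_of rot d) \<le> card {d, fs d, fs (fs d)}" by (intro card_mono) auto
  also have "\<dots> \<le> 3" by (simp add: card_insert_if)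
  finally show ?thesis .
qed

definition F where "F = faces E rot"

lemma faceF:
  assumes "f \<in> F"
  shows "finite f" "card f \<in> {5, 6}" "inj_on fst f" "f \<subseteq> E"
    "\<And>d. d \<in> f \<Longrightarrow> fs d \<in> f" "\<And>d. d \<in> f \<Longrightarrow> \<exists>p\<in>f. fs p = d"
    "\<And>d. d \<in> f \<Longrightarrow> face_of rot d = f"
proof -
  obtain d0 where d0: "d0 \<in> E" "f = face_of rot d0" using assms unfolding F_def faces_def by auto
  have p: "penta_or_hexa f" using ph assms unfolding F_def by auto
  then show c: "card f \<in> {5, 6}" unfolding penta_or_hexa_def by auto
  then show fin: "finite f" by (metis card.infinite empty_iff insert_iff zero_neq_numeral)
  show "inj_on fst f" using p fin unfolding penta_or_hexa_def by (metis eq_card_imp_inj_on)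
  show "f \<subseteq> E" using d0 face_sub by auto
  show "\<And>d. d \<in> f \<Longrightarrow> fs d \<in> f" using d0 face_step_in by auto
  show "\<And>d. d \<in> f \<Longrightarrow> \<exists>p\<in>f. fs p = d" using d0 face_pred by auto
  show "\<And>d. d \<in> f \<Longrightarrow> face_of rot d = f" using d0 face_eq by auto
qed

lemma finF: "finite F" unfolding F_def faces_def using finE by auto

lemma face_ofF: "d \<in> E \<Longrightarrow> face_of rot d \<in> F" unfolding F_def faces_def by auto

lemma fst_inj: "f \<in> F \<Longrightarrow> d \<in> f \<Longrightarrow> d' \<in> f \<Longrightarrow> fst d = fst d' \<Longrightarrow> d = d'"
  using faceF(3) by (meson inj_onD)

lemma snd_in: "f \<in> F \<Longrightarrow> d \<in> f \<Longrightarrow> snd d \<in> fst ` f"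
  using faceF(5)[of f d] by (metis fs_simp prod.collapse fst_conv image_eqI)

lemma snd_inj: "f \<in> F \<Longrightarrow> d \<in> f \<Longrightarrow> d' \<in> f \<Longrightarrow> snd d = snd d' \<Longrightarrow> d = d'"
proof -
  assume f: "f \<in> F" and d: "d \<in> f" and d': "d' \<in> f" and s: "snd d = snd d'"
  have "fst (fs d) = fst (fs d')" using s by (metis fs_simp fst_conv prod.collapse)
  then have "fs d = fs d'" using fst_inj[OF f] faceF(5)[OF f] d d' by blast
  then show "d = d'" using fs_inj faceF(4)[OF f] d d' by (meson inj_onD subsetD)
qed

end



context SP begin

definition Dc where "Dc = {v \<in> V. card (nbrs H v) = 3}"

lemma H_E: "(a, b) \<in> H \<Longrightarrow> (a, b) \<in> E" using HE by auto

lemma nbrsH_sub: "nbrs H v \<subseteq> nbrs E v" using HE unfolding nbrs_def by auto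

lemma star_local:
  assumes v: "v \<in> V"
  shows "\<exists>C c. card C = 4 \<and> c \<in> C \<and> v \<in> C \<and>
     (\<forall>u\<in>C. nbrs H u = (if u = c then C - {c} else {c}))"
proof -
  define C where "C = {u. (v, u) \<in> H\<^sup>*}"
  obtain c where c: "c \<in> C" "card C = 4"
    and eq: "H \<inter> (C \<times> C) = {(c, x) | x. x \<in> C - {c}} \<union> {(x, c) | x. x \<in> C - {c}}"
    using star[OF v] unfolding is_star_K13_def C_def by blast
  have vC: "v \<in> C" unfolding C_def by simp
  have clos: "u \<in> C \<Longrightarrow> (u, w) \<in> H \<Longrightarrow> w \<in> C" for u w
    unfolding C_def by (auto intro: rtrancl_into_rtrancl)
  have "nbrs H u = (if u = c then C - {c} else {c})" if u: "u \<in> C" for u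
  proof -
    have "nbrs H u = {w. (u, w) \<in> H \<inter> (C \<times> C)}" using clos u unfolding nbrs_def by auto
    also have "\<dots> = (if u = c then C - {c} else {c})" unfolding eq using u c by auto
    finally show ?thesis .
  qed
  then show ?thesis using c vC by blast
qed

lemma K1: "v \<in> V \<Longrightarrow> card (nbrs H v) = 3 \<or> (\<exists>c. nbrs H v = {c} \<and> card (nbrs H c) = 3)"
proof -
  assume "v \<in> V"
  then obtain C c where C: "card C = 4" "c \<in> C" "v \<in> C"
    and n: "\<forall>u\<in>C. nbrs H u = (if u = c then C - {c} else {c})" using star_local by blast
  have fC: "finite C" using C(1) by (metis card.infinite zero_neq_numeral)
  have "card (C - {c}) = 3" using C fC by simp
  then show ?thesis using n C by (cases "v = c") auto
qed

lemma K2: "v \<in> V \<Longrightarrow> card (nbrs H v) = 3 \<Longrightarrow> u \<in> nbrs H v \<Longrightarrow> nbrs H u = {v}"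
proof -
  assume v: "v \<in> V" and c3: "card (nbrs H v) = 3" and u: "u \<in> nbrs H v"
  then obtain C c where C: "card C = 4" "c \<in> C" "v \<in> C"
    and n: "\<forall>u\<in>C. nbrs H u = (if u = c then C - {c} else {c})" using star_local by blast
  have "v = c"
  proof (rule ccontr)
    assume "v \<noteq> c"
    then have "nbrs H v = {c}" using n C by auto
    then show False using c3 by simp
  qed
  then have "u \<in> C" "u \<noteq> c" using n C u by auto
  then show ?thesis using n \<open>v = c\<close> by auto
qed

lemma D_nbrs: "c \<in> Dc \<Longrightarrow> nbrs H c = nbrs E c"
  using card_subset_eq[OF fin_nbrs nbrsH_sub] nb3 unfolding Dc_def by auto

lemma F1: "c \<in> Dc \<Longrightarrow> (c, u) \<in> E \<Longrightarrow> u \<notin> Dc"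
proof
  assume c: "c \<in> Dc" and cu: "(c, u) \<in> E" and u: "u \<in> Dc"
  have "u \<in> nbrs H c" using D_nbrs[OF c] cu by simp
  then have "nbrs H u = {c}" using K2 c unfolding Dc_def by blast
  then show False using u unfolding Dc_def by simp
qed

lemma F2u: "(v, c) \<in> E \<Longrightarrow> (v, c') \<in> E \<Longrightarrow> c \<in> Dc \<Longrightarrow> c' \<in> Dc \<Longrightarrow> c = c'"
proof -
  assume a: "(v, c) \<in> E" "(v, c') \<in> E" "c \<in> Dc" "c' \<in> Dc"
  have "v \<in> nbrs H c" "v \<in> nbrs H c'" using D_nbrs a E_sym by auto
  then have "nbrs H v = {c}" "nbrs H v = {c'}" using K2 a unfolding Dc_def by blast+
  then show ?thesis by auto
qed

lemma F2e: "v \<in> V \<Longrightarrow> v \<notin> Dc \<Longrightarrow> \<exists>c\<in>Dc. (v, c) \<in> E"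
proof -
  assume v: "v \<in> V" "v \<notin> Dc"
  then have "card (nbrs H v) \<noteq> 3" unfolding Dc_def by auto
  then obtain c where c: "nbrs H v = {c}" "card (nbrs H c) = 3" using K1 v by blast
  then have "(v, c) \<in> E" using H_E unfolding nbrs_def by auto
  moreover then have "c \<in> V" using E_V by auto
  ultimately show ?thesis using c unfolding Dc_def by auto
qed

lemma finD: "finite Dc" using finV unfolding Dc_def by auto

lemma cardV: "card V = 4 * card Dc"
proof -
  have DV: "Dc \<subseteq> V" unfolding Dc_def by auto
  have U: "V - Dc = (\<Union>c\<in>Dc. nbrs E c)"
  proof
    show "V - Dc \<subseteq> (\<Union>c\<in>Dc. nbrs E c)"
    proof
      fix v assume "v \<in> V - Dc"
      then obtain c where "c \<in> Dc" "(v, c) \<in> E" using F2e by blast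
      then show "v \<in> (\<Union>c\<in>Dc. nbrs E c)" using E_sym by auto
    qed
    show "(\<Union>c\<in>Dc. nbrs E c) \<subseteq> V - Dc"
    proof
      fix v assume "v \<in> (\<Union>c\<in>Dc. nbrs E c)"
      then obtain c where "c \<in> Dc" "(c, v) \<in> E" by auto
      then show "v \<in> V - Dc" using F1 E_V by blast
    qed
  qed
  have "card (\<Union>c\<in>Dc. nbrs E c) = (\<Sum>c\<in>Dc. card (nbrs E c))"
  proof (rule card_UN_disjoint[OF finD])
    show "\<forall>i\<in>Dc. finite (nbrs E i)" using fin_nbrs by auto
    show "\<forall>i\<in>Dc. \<forall>j\<in>Dc. i \<noteq> j \<longrightarrow> nbrs E i \<inter> nbrs E j = {}"
    proof (intro ballI impI)
      fix i j assume "i \<in> Dc" "j \<in> Dc" "i \<noteq> j"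
      then show "nbrs E i \<inter> nbrs E j = {}" using F2u E_sym by (metis disjoint_iff nbrs_iff)
    qed
  qed
  also have "\<dots> = 3 * card Dc" using nb3 DV by (simp add: subset_iff)
  finally have "card (V - Dc) = 3 * card Dc" using U by simp
  moreover have "card V = card Dc + card (V - Dc)" using DV finV
    using card_Diff_subset[OF finD DV] card_mono[OF finV DV] by simp
  ultimately show ?thesis by simp
qed

end



context SP begin

definition cs where "cs f = {c \<in> Dc. c \<in> fst ` f}"
definition Aset where "Aset f c = insert c ({snd d |d. d \<in> f \<and> fst d = c} \<union> {fst d |d. d \<in> f \<and> snd d = c})"

lemma fin_cs: "finite (cs f)" using finD unfolding cs_def by auto

lemma Aset_sub: "f \<in> F \<Longrightarrow> c \<in> fst ` f \<Longrightarrow> Aset f c \<subseteq> fst ` f"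
  unfolding Aset_def using snd_in by (auto intro: rev_image_eqI)

lemma Aset_nb: "f \<in> F \<Longrightarrow> v \<in> Aset f c \<Longrightarrow> v \<noteq> c \<Longrightarrow> (v, c) \<in> E"
proof -
  assume f: "f \<in> F" and v: "v \<in> Aset f c" "v \<noteq> c"
  then obtain d where "d \<in> f" "(fst d = c \<and> snd d = v) \<or> (snd d = c \<and> fst d = v)"
    unfolding Aset_def by auto
  moreover have "d \<in> E" using faceF(4)[OF f] \<open>d \<in> f\<close> by auto
  ultimately show ?thesis using E_sym by (metis prod.collapse)
qed

lemma Aset_card: assumes f: "f \<in> F" and c: "c \<in> cs f" shows "3 \<le> card (Aset f c)"
proof -
  obtain d where d: "d \<in> f" "fst d = c" using c unfolding cs_def by auto
  obtain p where p: "p \<in> f" "fs p = d" using faceF(6)[OF f d(1)] by auto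
  obtain q where dq: "d = (c, q)" using d by (cases d) simp
  obtain x y where pxy: "p = (x, y)" by (cases p)
  have "y = c" using p dq pxy by simp
  then have px: "p = (x, c)" using pxy by simp
  have rq: "rot c x = q" using p dq px by simp
  have fE: "f \<subseteq> E" using faceF(4)[OF f] .
  have xE: "(x, c) \<in> E" using fE p px by blast
  have dE: "(c, q) \<in> E" using fE d(1) unfolding dq by blast
  have cV: "c \<in> V" "x \<in> nbrs E c" using xE E_V E_sym by auto
  have "q \<noteq> x" using rot_nofix[OF cV] rq by blast
  moreover have "c \<noteq> x" using irr xE by blast
  moreover have "c \<noteq> q" using irr dE by blast
  ultimately have c3: "card {c, q, x} = 3" by simp
  have "q \<in> {snd d |d. d \<in> f \<and> fst d = c}" using d dq by auto
  moreover have "x \<in> {fst d |d. d \<in> f \<and> snd d = c}"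
  proof -
    have "x = fst p" "snd p = c" using px by auto
    then show ?thesis using p(1) by blast
  qed
  ultimately have sub: "{c, q, x} \<subseteq> Aset f c" unfolding Aset_def by blast
  have fin: "finite (Aset f c)"
  proof (rule finite_subset)
    show "Aset f c \<subseteq> fst ` f" using Aset_sub[OF f] c unfolding cs_def by blast
    show "finite (fst ` f)" using faceF(1)[OF f] by blast
  qed
  have "card {c, q, x} \<le> card (Aset f c)" by (rule card_mono[OF fin sub])
  then show ?thesis using c3 by simp
qed

lemma Aset_disj: assumes f: "f \<in> F" and c: "c \<in> cs f" and c': "c' \<in> cs f" and ne: "c \<noteq> c'"
  shows "Aset f c \<inter> Aset f c' = {}"
proof (rule ccontr)
  assume "Aset f c \<inter> Aset f c' \<noteq> {}"
  then obtain v where v: "v \<in> Aset f c" "v \<in> Aset f c'" by auto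
  have cD: "c \<in> Dc" "c' \<in> Dc" using c c' unfolding cs_def by auto
  show False
  proof (cases "v = c")
    case True
    then have "(c, c') \<in> E" using Aset_nb[OF f v(2)] ne by auto
    then show False using F1 cD by blast
  next
    case False
    then have e1: "(v, c) \<in> E" using Aset_nb[OF f v(1)] by auto
    show False
    proof (cases "v = c'")
      case True
      then show False using e1 F1 cD E_sym by blast
    next
      case False
      then have "(v, c') \<in> E" using Aset_nb[OF f v(2)] by auto
      then show False using F2u e1 cD ne by blast
    qed
  qed
qed

lemma cs_bound:
  assumes f: "f \<in> F"
  shows "3 * card (cs f) + card (fst ` f - (\<Union>c\<in>cs f. Aset f c)) \<le> 6"
proof -
  have fin: "finite (fst ` f)" using faceF(1)[OF f] by blast
  have sub1: "\<And>c. c \<in> cs f \<Longrightarrow> Aset f c \<subseteq> fst ` f" using Aset_sub[OF f] unfolding cs_def by blast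
  then have sub: "(\<Union>c\<in>cs f. Aset f c) \<subseteq> fst ` f" by blast
  have finA: "\<forall>c\<in>cs f. finite (Aset f c)" using sub1 fin finite_subset by blast
  have disj: "\<forall>i\<in>cs f. \<forall>j\<in>cs f. i \<noteq> j \<longrightarrow> Aset f i \<inter> Aset f j = {}"
    using Aset_disj[OF f] by blast
  have "card (\<Union>c\<in>cs f. Aset f c) = (\<Sum>c\<in>cs f. card (Aset f c))"
    by (rule card_UN_disjoint[OF fin_cs finA disj])
  moreover have "(\<Sum>c\<in>cs f. (3::nat)) \<le> (\<Sum>c\<in>cs f. card (Aset f c))"
    by (rule sum_mono) (rule Aset_card[OF f])
  moreover have "(\<Sum>c\<in>cs f. (3::nat)) = 3 * card (cs f)" by simp
  ultimately have A: "3 * card (cs f) \<le> card (\<Union>c\<in>cs f. Aset f c)" by linarith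
  have finU: "finite (\<Union>c\<in>cs f. Aset f c)" using finite_subset[OF sub fin] .
  have B: "card (fst ` f - (\<Union>c\<in>cs f. Aset f c)) = card (fst ` f) - card (\<Union>c\<in>cs f. Aset f c)"
    by (rule card_Diff_subset[OF finU sub])
  have C: "card (\<Union>c\<in>cs f. Aset f c) \<le> card (fst ` f)" by (rule card_mono[OF fin sub])
  have "card (fst ` f) \<le> card f" by (rule card_image_le[OF faceF(1)[OF f]])
  moreover have "card f \<le> 6" using faceF(2)[OF f] by auto
  ultimately have D: "card (fst ` f) \<le> 6" by linarith
  show ?thesis using A B C D by linarith
qed

lemma cs_le2: "f \<in> F \<Longrightarrow> card (cs f) \<le> 2" using cs_bound[of f] by linarith

lemma cs_le1: "f \<in> F \<Longrightarrow> x \<in> fst ` f \<Longrightarrow> (\<forall>c\<in>cs f. x \<notin> Aset f c) \<Longrightarrow> card (cs f) \<le> 1"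
proof -
  assume f: "f \<in> F" and x: "x \<in> fst ` f" "\<forall>c\<in>cs f. x \<notin> Aset f c"
  have "finite (fst ` f)" using faceF(1)[OF f] by auto
  have "card (fst ` f - (\<Union>c\<in>cs f. Aset f c)) \<ge> 1"
  proof -
    have "fst ` f - (\<Union>c\<in>cs f. Aset f c) \<noteq> {}" using x by blast
    moreover have "finite (fst ` f - (\<Union>c\<in>cs f. Aset f c))" using \<open>finite (fst ` f)\<close> by blast
    ultimately show ?thesis using card_gt_0_iff by (metis One_nat_def Suc_leI)
  qed
  then show ?thesis using cs_bound[OF f] by linarith
qed

end



lemma even_pairing:
  assumes "finite S" "\<forall>x\<in>S. \<exists>y\<in>S. R x y" "\<forall>x y. R x y \<longrightarrow> R y x" "\<forall>x\<in>S. \<not> R x x"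
    "\<forall>x\<in>S. \<forall>y\<in>S. \<forall>z\<in>S. R x y \<longrightarrow> R x z \<longrightarrow> y = z"
  shows "even (card S)"
  using assms
proof (induction "card S" arbitrary: S rule: less_induct)
  case less
  show ?case
  proof (cases "S = {}")
    case True then show ?thesis by simp
  next
    case False
    then obtain x where x: "x \<in> S" by blast
    then obtain y where y: "y \<in> S" "R x y" using less.prems(2) by blast
    have xy: "x \<noteq> y" using y less.prems(4) x by blast
    define S' where "S' = S - {x, y}"
    have "card {x, y} \<le> card S" using less.prems(1) x y by (intro card_mono) auto
    then have "card S \<ge> 2" using xy by simp
    then have cS: "card S = card S' + 2" using less.prems(1) x y xy unfolding S'_def
      by (simp add: card_Diff_subset)
    have "even (card S')"
    proof (rule less.hyps)
      show "card S' < card S" using cS by simp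
      show "finite S'" using less.prems(1) unfolding S'_def by simp
      show "\<forall>x\<in>S'. \<exists>y\<in>S'. R x y"
      proof
        fix z assume z: "z \<in> S'"
        then have zS: "z \<in> S" "z \<noteq> x" "z \<noteq> y" unfolding S'_def by auto
        then obtain w where w: "w \<in> S" "R z w" using less.prems(2) by blast
        have "w \<noteq> x"
        proof
          assume "w = x"
          then have "R x z" using w less.prems(3) by blast
          then show False using less.prems(5) x y zS by blast
        qed
        moreover have "w \<noteq> y"
        proof
          assume "w = y"
          then have "R y z" "R y x" using w y less.prems(3) by blast+
          then show False using less.prems(5) x y zS by blast
        qed
        ultimately show "\<exists>y\<in>S'. R z y" using w unfolding S'_def by blast
      qed
      show "\<forall>x y. R x y \<longrightarrow> R y x" using less.prems(3) .
      show "\<forall>x\<in>S'. \<not> R x x" using less.prems(4) unfolding S'_def by blast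
      show "\<forall>x\<in>S'. \<forall>y\<in>S'. \<forall>z\<in>S'. R x y \<longrightarrow> R x z \<longrightarrow> y = z"
        using less.prems(5) unfolding S'_def by blast
    qed
    then show ?thesis using cS by simp
  qed
qed

context SP begin

definition Rel where "Rel f g \<longleftrightarrow> (\<exists>a b. (a, b) \<in> f \<and> (b, a) \<in> g \<and> rot b a \<in> Dc \<and> rot a b \<in> Dc)"

definition S1 where "S1 = {f \<in> F. card (cs f) = 1}"

lemma Rel_sym: "Rel f g \<Longrightarrow> Rel g f" unfolding Rel_def by blast

lemma Rel_irr: assumes f: "f \<in> F" shows "\<not> Rel f f"
proof
  assume "Rel f f"
  then obtain a b where ab: "(a, b) \<in> f" "(b, a) \<in> f" unfolding Rel_def by blast
  have "fs (a, b) \<in> f" using faceF(5)[OF f ab(1)] .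
  then have "(b, rot b a) = (b, a)" using fst_inj[OF f _ ab(2)] by simp
  then have "rot b a = a" by simp
  moreover have "(a, b) \<in> E" using faceF(4)[OF f] ab(1) by blast
  ultimately show False using rot_nofix E_V E_sym by (metis nbrs_iff)
qed

lemma S1_center: assumes "f \<in> S1" obtains c where "cs f = {c}"
  using assms unfolding S1_def by (auto simp: card_1_singleton_iff)

lemma Rel_uniq:
  assumes f: "f \<in> S1" and g: "g \<in> F" and g': "g' \<in> F" and R: "Rel f g" "Rel f g'"
  shows "g = g'"
proof -
  obtain c where c: "cs f = {c}" using S1_center[OF f] by blast
  have fF: "f \<in> F" using f unfolding S1_def by auto
  obtain a b where ab: "(a, b) \<in> f" "(b, a) \<in> g" "rot b a \<in> Dc" using R(1) unfolding Rel_def by blast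
  obtain a' b' where ab': "(a', b') \<in> f" "(b', a') \<in> g'" "rot b' a' \<in> Dc" using R(2) unfolding Rel_def by blast
  have s1: "(b, rot b a) \<in> f" using faceF(5)[OF fF ab(1)] by simp
  have s2: "(b', rot b' a') \<in> f" using faceF(5)[OF fF ab'(1)] by simp
  have "rot b a \<in> cs f" using snd_in[OF fF s1] ab(3) unfolding cs_def by simp
  then have r1: "rot b a = c" using c by blast
  have "rot b' a' \<in> cs f" using snd_in[OF fF s2] ab'(3) unfolding cs_def by simp
  then have r2: "rot b' a' = c" using c by blast
  have "(b, rot b a) = (b', rot b' a')" using snd_inj[OF fF s1 s2] r1 r2 by simp
  then have bb: "b = b'" by simp
  have "(a, b) = (a', b')" using snd_inj[OF fF ab(1) ab'(1)] bb by simp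
  then have "(b, a) = (b', a')" by simp
  then show ?thesis using faceF(7)[OF g ab(2)] faceF(7)[OF g' ab'(2)] by simp
qed

end



context SP begin

lemma Rel_ex: assumes f: "f \<in> S1" shows "\<exists>g\<in>S1. Rel f g"
proof -
  obtain c where c: "cs f = {c}" using S1_center[OF f] by blast
  have fF: "f \<in> F" using f unfolding S1_def by auto
  have fE: "f \<subseteq> E" using faceF(4)[OF fF] .
  have cD: "c \<in> Dc" "c \<in> fst ` f" using c unfolding cs_def by auto
  obtain dc where dc: "dc \<in> f" "fst dc = c" using cD by auto
  obtain q where dcq: "dc = (c, q)" using dc by (cases dc) simp
  obtain p1 where p1: "p1 \<in> f" "fs p1 = dc" using faceF(6)[OF fF dc(1)] by blast
  obtain x y1 where p1x: "p1 = (x, y1)" by (cases p1)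
  have "y1 = c" using p1 p1x dcq by simp
  then have p1x: "p1 = (x, c)" using p1x by simp
  obtain p0 where p0: "p0 \<in> f" "fs p0 = p1" using faceF(6)[OF fF p1(1)] by blast
  obtain w y0 where p0w: "p0 = (w, y0)" by (cases p0)
  have "y0 = x" "rot x w = c" using p0 p0w p1x by auto
  then have p0w: "p0 = (w, x)" and rxw: "rot x w = c" using p0w by simp_all
  obtain pm where pm: "pm \<in> f" "fs pm = p0" using faceF(6)[OF fF p0(1)] by blast
  obtain w' ym where pmw: "pm = (w', ym)" by (cases pm)
  have "ym = w" "rot w w' = x" using pm pmw p0w by auto
  then have pmw: "pm = (w', w)" and rww: "rot w w' = x" using pmw by simp_all
  have xcE: "(x, c) \<in> E" using fE p1(1) p1x by blast
  have wxE: "(w, x) \<in> E" using fE p0(1) p0w by blast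
  have wwE: "(w', w) \<in> E" using fE pm(1) pmw by blast
  have xV: "x \<in> V" and wV: "w \<in> V" using xcE wxE E_V by auto
  have xnD: "x \<notin> Dc" using F1[OF cD(1)] E_sym[OF xcE] by blast
  have wnD: "w \<notin> Dc"
  proof
    assume "w \<in> Dc"
    then have "w = c" using F2u[OF E_sym[OF wxE] xcE] cD(1) by blast
    then have "rot x c = c" using rxw by simp
    moreover have "c \<in> nbrs E x" using xcE by simp
    ultimately show False using rot_nofix[OF xV] by blast
  qed
  obtain c' where c': "c' \<in> Dc" "(w, c') \<in> E" using F2e[OF wV wnD] by blast
  have w'c': "w' \<noteq> c'"
  proof
    assume "w' = c'"
    then have "w' \<in> cs f" using c'(1) pm(1) pmw unfolding cs_def by force
    then have "w' = c" using c by blast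
    then have "dc = pm" using fst_inj[OF fF dc(1) pm(1)] dc(2) pmw by simp
    have "(fs ^^ 3) pm = fs (fs (fs pm))" by (simp add: numeral_3_eq_3 del: fs_simp)
    also have "\<dots> = pm" using pm(2) p0(2) p1(2) \<open>dc = pm\<close> by simp
    finally have "card (face_of rot pm) \<le> 3" using face_card3 by blast
    then have "card f \<le> 3" using faceF(7)[OF fF pm(1)] by simp
    then show False using faceF(2)[OF fF] by auto
  qed
  have rwx: "rot w x = c'"
  proof -
    have "rot w (rot w w') = c'"
    proof (rule rot_third[OF wV])
      show "w' \<in> nbrs E w" using E_sym[OF wwE] by simp
      show "c' \<in> nbrs E w" using c' by simp
      show "c' \<noteq> w'" using w'c' by simp
      show "c' \<noteq> rot w w'" using rww c'(1) xnD by auto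
    qed
    then show ?thesis using rww by simp
  qed
  define g where "g = face_of rot (x, w)"
  have xwE: "(x, w) \<in> E" using E_sym[OF wxE] .
  have gF: "g \<in> F" unfolding g_def using face_ofF[OF xwE] .
  have xwg: "(x, w) \<in> g" unfolding g_def by (rule face_self)
  have R: "Rel f g" unfolding Rel_def using p0(1) p0w xwg rxw rwx cD(1) c'(1) by blast
  have wc'g: "(w, c') \<in> g" using faceF(5)[OF gF xwg] rwx by simp
  have c'g: "c' \<in> cs g" using snd_in[OF gF wc'g] c'(1) unfolding cs_def by simp
  have ge1: "card (cs g) \<ge> 1" using c'g fin_cs by (metis One_nat_def Suc_leI card_gt_0_iff empty_iff)
  have xg: "x \<in> fst ` g" using xwg by force
  have notA: "\<forall>c''\<in>cs g. x \<notin> Aset g c''"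
  proof (intro ballI notI)
    fix c'' assume c'': "c'' \<in> cs g" and xA: "x \<in> Aset g c''"
    have c''D: "c'' \<in> Dc" using c'' unfolding cs_def by auto
    have "x = c'' \<or> (\<exists>d. d \<in> g \<and> fst d = c'' \<and> snd d = x) \<or> (\<exists>d. d \<in> g \<and> snd d = c'' \<and> fst d = x)"
      using xA unfolding Aset_def by blast
    then show False
    proof (elim disjE exE conjE)
      assume "x = c''" then show False using xnD c''D by simp
    next
      fix d assume d: "d \<in> g" "fst d = c''" "snd d = x"
      then have dd: "d = (c'', x)" by (cases d) simp
      have "fs d \<in> g" using faceF(5)[OF gF d(1)] .
      then have "(x, rot x c'') = (x, w)" using fst_inj[OF gF _ xwg] dd by simp
      then have rxc: "rot x c'' = w" by simp
      have "(c'', x) \<in> E" using faceF(4)[OF gF] d(1) dd by blast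
      then have "c'' = c" using F2u[OF E_sym xcE c''D cD(1)] by blast
      then have "rot x (rot x w) = w" using rxc rxw by simp
      moreover have "w \<in> nbrs E x" using xwE by simp
      ultimately show False using rot_no2[OF xV] by blast
    next
      fix d assume d: "d \<in> g" "snd d = c''" "fst d = x"
      then have dd: "d = (x, c'')" by (cases d) simp
      then have "d = (x, w)" using fst_inj[OF gF d(1) xwg] d(3) by simp
      then have "c'' = w" using dd by simp
      then show False using wnD c''D by simp
    qed
  qed
  have "card (cs g) \<le> 1" using cs_le1[OF gF xg notA] .
  then have "g \<in> S1" using ge1 gF unfolding S1_def by simp
  then show ?thesis using R by blast
qed

end



context SP begin

lemma even_S1: "even (card S1)"
proof (rule even_pairing[where R = Rel])
  show "finite S1" using finF unfolding S1_def by simp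
  show "\<forall>x\<in>S1. \<exists>y\<in>S1. Rel x y" using Rel_ex by blast
  show "\<forall>x y. Rel x y \<longrightarrow> Rel y x" using Rel_sym by blast
  show "\<forall>x\<in>S1. \<not> Rel x x" using Rel_irr unfolding S1_def by blast
  show "\<forall>x\<in>S1. \<forall>y\<in>S1. \<forall>z\<in>S1. Rel x y \<longrightarrow> Rel x z \<longrightarrow> y = z"
    using Rel_uniq unfolding S1_def by blast
qed

lemma card_filter_sum: "finite A \<Longrightarrow> card {x \<in> A. P x} = (\<Sum>x\<in>A. if P x then 1 else 0)"
  using sum.inter_filter[of A "\<lambda>_. (1::nat)" P] by simp

lemma faces_at: assumes c: "c \<in> Dc" shows "card {f \<in> F. c \<in> fst ` f} = 3"
proof -
  have cV: "c \<in> V" using c unfolding Dc_def by auto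
  let ?N = "Pair c ` nbrs E c"
  have eq: "{f \<in> F. c \<in> fst ` f} = face_of rot ` ?N"
  proof
    show "face_of rot ` ?N \<subseteq> {f \<in> F. c \<in> fst ` f}"
    proof
      fix f assume "f \<in> face_of rot ` ?N"
      then obtain u where u: "(c, u) \<in> E" "f = face_of rot (c, u)" by auto
      have "(c, u) \<in> f" using u(2) face_self by simp
      then show "f \<in> {f \<in> F. c \<in> fst ` f}" using face_ofF[OF u(1)] u(2) by force
    qed
    show "{f \<in> F. c \<in> fst ` f} \<subseteq> face_of rot ` ?N"
    proof
      fix f assume "f \<in> {f \<in> F. c \<in> fst ` f}"
      then have f: "f \<in> F" "c \<in> fst ` f" by auto
      then obtain d where d: "d \<in> f" "fst d = c" by auto
      obtain u where du: "d = (c, u)" using d by (cases d) simp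
      have "(c, u) \<in> E" using faceF(4)[OF f(1)] d(1) du by blast
      then have "d \<in> ?N" using du by simp
      moreover have "f = face_of rot d" using faceF(7)[OF f(1) d(1)] by simp
      ultimately show "f \<in> face_of rot ` ?N" by blast
    qed
  qed
  have inj: "inj_on (face_of rot) ?N"
  proof (rule inj_onI)
    fix d d' assume d: "d \<in> ?N" and d': "d' \<in> ?N" and e: "face_of rot d = face_of rot d'"
    have dE: "d \<in> E" and d'E: "d' \<in> E" using d d' by auto
    have fF: "face_of rot d \<in> F" using face_ofF[OF dE] .
    have "d \<in> face_of rot d" by (rule face_self)
    moreover have "d' \<in> face_of rot d" unfolding e by (rule face_self)
    moreover have "fst d = fst d'" using d d' by auto
    ultimately show "d = d'" using fst_inj[OF fF] by blast
  qed
  have "card (face_of rot ` ?N) = card ?N" using card_image[OF inj] .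
  also have "card ?N = card (nbrs E c)" by (rule card_image) (simp add: inj_on_def)
  also have "\<dots> = 3" using nb3[OF cV] .
  finally show ?thesis using eq by simp
qed

lemma sum_cs: "(\<Sum>f\<in>F. card (cs f)) = 3 * card Dc"
proof -
  have "(\<Sum>f\<in>F. card (cs f)) = (\<Sum>f\<in>F. \<Sum>c\<in>Dc. if c \<in> fst ` f then 1 else 0)"
    unfolding cs_def using card_filter_sum[OF finD] by simp
  also have "\<dots> = (\<Sum>c\<in>Dc. \<Sum>f\<in>F. if c \<in> fst ` f then 1 else 0)" by (rule sum.swap)
  also have "\<dots> = (\<Sum>c\<in>Dc. card {f \<in> F. c \<in> fst ` f})"
    using card_filter_sum[OF finF] by simp
  also have "\<dots> = (\<Sum>c\<in>Dc. 3)" using faces_at by simp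
  finally show ?thesis by simp
qed

lemma sum_cs2: "(\<Sum>f\<in>F. card (cs f)) = card S1 + 2 * card {f \<in> F. card (cs f) = 2}"
proof -
  have "(\<Sum>f\<in>F. card (cs f)) = (\<Sum>f\<in>F. (if card (cs f) = 1 then 1 else 0) + 2 * (if card (cs f) = 2 then 1 else 0))"
  proof (rule sum.cong)
    fix f assume "f \<in> F"
    then have "card (cs f) \<le> 2" using cs_le2 by blast
    then show "card (cs f) = (if card (cs f) = 1 then 1 else 0) + 2 * (if card (cs f) = 2 then 1 else 0)"
      by auto
  qed simp
  also have "\<dots> = card S1 + 2 * card {f \<in> F. card (cs f) = 2}"
    unfolding S1_def card_filter_sum[OF finF] sum.distrib sum_distrib_left by simp
  finally show ?thesis .
qed

lemma main: "8 dvd card V"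
proof -
  have "3 * card Dc = card S1 + 2 * card {f \<in> F. card (cs f) = 2}" using sum_cs sum_cs2 by simp
  then have "even (3 * card Dc)" using even_S1 by simp
  then have "even (card Dc)" by simp
  then show ?thesis using cardV by auto
qed

end


theorem mainTheorem1:
  fixes V :: "'a set" and E :: "('a \<times> 'a) set"
  assumes "fullerene V E"
    and "perfect_star_packing V E"
  shows "8 dvd card V"
proof -
  have sg: "simple_graph V E" and cub: "cubic V E"
    and ex: "\<exists>rot. plane_embedding V E rot \<and> (\<forall>f\<in>faces E rot. penta_or_hexa f)"
    using assms(1) unfolding fullerene_def by auto
  obtain rot where rot: "plane_embedding V E rot" "\<forall>f\<in>faces E rot. penta_or_hexa f" using ex by blast
  obtain H where H: "H \<subseteq> E" "sym H" "\<forall>v\<in>V. is_star_K13 {u. (v, u) \<in> H\<^sup>*} H"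
    using assms(2) unfolding perfect_star_packing_def by blast
  interpret SP V E rot H
  proof
    show "finite V" "E \<subseteq> V \<times> V" "sym E" using sg unfolding simple_graph_def by auto
    show "\<And>v. (v, v) \<notin> E" using sg unfolding simple_graph_def by auto
    show "cubic V E" using cub .
    show "rotation_system V E rot" using rot(1) unfolding plane_embedding_def by auto
    show "\<And>f. f \<in> faces E rot \<Longrightarrow> penta_or_hexa f" using rot(2) by auto
    show "H \<subseteq> E" "sym H" using H by auto
    show "\<And>v. v \<in> V \<Longrightarrow> is_star_K13 {u. (v, u) \<in> H\<^sup>*} H" using H by auto
  qed
  show ?thesis by (rule main)
qed

end
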